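(* Let $k\ge 2$ be a fixed integer. Then, as $n\to\infty$, $$\mu_{tsp,k}(C_n)\sim\left(1-\frac{1}{2^{k-1}}\right)n,$$ i.e. $\mu_{tsp,k}(C_n)/n\to 1-2^{-(k-1)}$.
   Context: $C_n$ is the cycle on $n$ vertices. For a set $S$ of $k$ vertices of a graph $G$ of order $n$, $\mathrm{tsp}_k(S)$ is the length (number of edge traversals, with multiplicity) of a shortest closed walk in $G$ visiting all vertices of $S$, and $\mu_{tsp,k}(G)=\binom{n}{k}^{-1}\sum_{S\subseteq V,\,|S|=k}\mathrm{tsp}_k(S)$. *)

theory Defs
  imports Complex_Main
begin

definition cycle_adj :: "nat \<Rightarrow> nat \<Rightarrow> nat \<Rightarrow> bool" where
  "cycle_adj n u v \<longleftrightarrow> u < n \<and> v < n \<and> u \<noteq> v \<and> ((u + 1) mod n = v \<or> (v + 1) mod n = u)"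

definition closed_walk :: "('a \<Rightarrow> 'a \<Rightarrow> bool) \<Rightarrow> 'a list \<Rightarrow> bool" where
  "closed_walk E w \<longleftrightarrow> w \<noteq> [] \<and> hd w = last w \<and> (\<forall>i < length w - 1. E (w ! i) (w ! Suc i))"

definition walk_length :: "'a list \<Rightarrow> nat" where
  "walk_length w = length w - 1"

definition tsp :: "('a \<Rightarrow> 'a \<Rightarrow> bool) \<Rightarrow> 'a set \<Rightarrow> nat" where
  "tsp E S = (LEAST m. \<exists>w. closed_walk E w \<and> S \<subseteq> set w \<and> walk_length w = m)"

definition mu_tsp :: "'a set \<Rightarrow> ('a \<Rightarrow> 'a \<Rightarrow> bool) \<Rightarrow> nat \<Rightarrow> real" where
  "mu_tsp V E k = (\<Sum>S \<in> {S. S \<subseteq> V \<and> card S = k}. real (tsp E S)) / real (card V choose k)"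

end

theory Submission
  imports Defs
begin


definition off :: "nat \<Rightarrow> nat \<Rightarrow> nat \<Rightarrow> nat" where
  "off n a v = (if a \<le> v then v - a else v + n - a)"

definition fits :: "nat \<Rightarrow> nat set \<Rightarrow> nat \<Rightarrow> bool" where
  "fits n S L \<longleftrightarrow> (\<exists>a<n. \<forall>v\<in>S. off n a v \<le> L)"

lemma off_lt: "a < n \<Longrightarrow> v < n \<Longrightarrow> off n a v < n"
  unfolding off_def by auto

lemma off_self: "off n a a = 0"
  unfolding off_def by auto

lemma off_diff: "c < n \<Longrightarrow> a < n \<Longrightarrow> v < n \<Longrightarrow> off n c a \<le> off n c v \<Longrightarrow>
  off n a v = off n c v - off n c a"
  unfolding off_def by (auto split: if_splits)

lemma off_sum: "a < n \<Longrightarrow> v < n \<Longrightarrow> a \<noteq> v \<Longrightarrow> off n a v + off n v a = n"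
  unfolding off_def by auto

lemma off_inv: "a < n \<Longrightarrow> v < n \<Longrightarrow> (a + off n a v) mod n = v"
proof (cases "a \<le> v")
  case True
  assume "a < n" "v < n" then show ?thesis using True unfolding off_def by auto
next
  case False
  assume "a < n" "v < n"
  then have "a + off n a v = v + n" using False unfolding off_def by auto
  then show ?thesis using \<open>v < n\<close> by simp
qed

lemma mod_lt2: "(x::nat) < 2 * n \<Longrightarrow> x mod n = (if x < n then x else x - n)"
  by (auto simp: le_mod_geq intro: mod_less)

lemma off_of: "a < n \<Longrightarrow> t < n \<Longrightarrow> off n a ((a + t) mod n) = t"
  unfolding off_def by (auto simp: mod_lt2)

lemma step_off:
  assumes "c < n" "u < n" "(u + 1) mod n = v" "u \<noteq> c"
  shows "off n (Suc c mod n) v = Suc (off n (Suc c mod n) u)"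
  using assms unfolding off_def by (auto simp: mod_lt2 split: if_splits)


lemma walk_from:
  assumes n2: "n \<ge> 2"
    and steps: "\<And>i. i < len \<Longrightarrow> g (Suc i) = Suc (g i) \<or> g i = Suc (g (Suc i))"
    and cl: "(a + g 0) mod n = (a + g len) mod n"
  shows "closed_walk (cycle_adj n) (map (\<lambda>i. (a + g i) mod n) [0..<Suc len])"
    and "walk_length (map (\<lambda>i. (a + g i) mod n) [0..<Suc len]) = len"
    and "set (map (\<lambda>i. (a + g i) mod n) [0..<Suc len]) = (\<lambda>i. (a + g i) mod n) ` {..len}"
proof -
  have adj: "cycle_adj n (x mod n) (Suc x mod n)" for x
  proof -
    have a1: "x mod n < n" "Suc x mod n < n" using n2 by auto
    have a2: "(x mod n + 1) mod n = Suc x mod n" by (simp add: mod_Suc_eq)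
    have a3: "x mod n \<noteq> Suc x mod n"
    proof
      assume h: "x mod n = Suc x mod n"
      show False
      proof (cases "Suc (x mod n) < n")
        case True
        then show ?thesis using h a2 by simp
      next
        case False
        have "x mod n < n" using n2 by simp
        then have "Suc (x mod n) = n" using False by simp
        then have "Suc (x mod n) mod n = 0" by simp
        then show ?thesis using h a2 \<open>Suc (x mod n) = n\<close> n2 by simp
      qed
    qed
    show ?thesis unfolding cycle_adj_def using a1 a2 a3 by auto
  qed
  let ?w = "map (\<lambda>i. (a + g i) mod n) [0..<Suc len]"
  show "walk_length ?w = len" unfolding walk_length_def by simp
  show "set ?w = (\<lambda>i. (a + g i) mod n) ` {..len}"
    by (simp only: set_map set_upt atLeast0LessThan lessThan_Suc_atMost)
  show "closed_walk (cycle_adj n) ?w"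
    unfolding closed_walk_def
  proof (intro conjI allI impI)
    show "?w \<noteq> []" by simp
    have "[0..<Suc len] = 0 # [Suc 0..<Suc len]" by (rule upt_conv_Cons) simp
    then have "hd ?w = (a + g 0) mod n" by simp
    moreover have "last ?w = (a + g len) mod n" by simp
    ultimately show "hd ?w = last ?w" using cl by simp
    fix i assume "i < length ?w - 1"
    then have i: "i < len" by simp
    have e1: "?w ! i = (a + g i) mod n" using i by (simp del: upt_Suc)
    have e2: "?w ! Suc i = (a + g (Suc i)) mod n" using i by (simp del: upt_Suc)
    show "cycle_adj n (?w ! i) (?w ! Suc i)"
      unfolding e1 e2
    proof (cases "g (Suc i) = Suc (g i)")
      case True
      then show "cycle_adj n ((a + g i) mod n) ((a + g (Suc i)) mod n)"
        using adj[of "a + g i"] by simp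
    next
      case False
      then have "g i = Suc (g (Suc i))" using steps i by blast
      then have "cycle_adj n ((a + g (Suc i)) mod n) ((a + g i) mod n)"
        using adj[of "a + g (Suc i)"] by simp
      then show "cycle_adj n ((a + g i) mod n) ((a + g (Suc i)) mod n)"
        unfolding cycle_adj_def by auto
    qed
  qed
qed

lemma tsp_le: "closed_walk E w \<Longrightarrow> S \<subseteq> set w \<Longrightarrow> tsp E S \<le> walk_length w"
  unfolding tsp_def by (rule Least_le) blast

lemma tsp_ex: "closed_walk E w0 \<Longrightarrow> S \<subseteq> set w0 \<Longrightarrow>
  \<exists>w. closed_walk E w \<and> S \<subseteq> set w \<and> walk_length w = tsp E S"
  unfolding tsp_def by (rule LeastI_ex) blast

lemma around:
  assumes "n \<ge> 2"
  shows "\<exists>w. closed_walk (cycle_adj n) w \<and> {..<n} \<subseteq> set w \<and> walk_length w = n"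
proof -
  note W = walk_from[OF assms, of n id 0]
  have "{..<n} \<subseteq> (\<lambda>i. (0 + id i) mod n) ` {..n}"
  proof
    fix x assume "x \<in> {..<n}"
    then show "x \<in> (\<lambda>i. (0 + id i) mod n) ` {..n}" by (intro image_eqI[of _ _ x]) auto
  qed
  then show ?thesis using W by (intro exI[of _ "map (\<lambda>i. (0 + id i) mod n) [0..<Suc n]"]) auto
qed

lemma tsp_le_n: "n \<ge> 2 \<Longrightarrow> S \<subseteq> {..<n} \<Longrightarrow> tsp (cycle_adj n) S \<le> n"
  using around[of n] tsp_le by (metis order_trans)

lemma tsp_le_fits:
  assumes n2: "n \<ge> 2" and S: "S \<subseteq> {..<n}" and L: "L < n" and f: "fits n S L"
  shows "tsp (cycle_adj n) S \<le> 2 * L"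
proof -
  obtain a where a: "a < n" "\<forall>v\<in>S. off n a v \<le> L" using f unfolding fits_def by blast
  define g where "g = (\<lambda>i::nat. if i \<le> L then i else 2 * L - i)"
  note W = walk_from[OF n2, of "2 * L" g a]
  have st: "g (Suc i) = Suc (g i) \<or> g i = Suc (g (Suc i))" if "i < 2 * L" for i
    using that unfolding g_def by auto
  have cl: "(a + g 0) mod n = (a + g (2 * L)) mod n" unfolding g_def by auto
  have sub: "S \<subseteq> (\<lambda>i. (a + g i) mod n) ` {..2 * L}"
  proof
    fix v assume v: "v \<in> S"
    then have "v < n" using S by auto
    then have "v = (a + g (off n a v)) mod n" using off_inv[OF a(1)] a(2) v unfolding g_def by auto
    moreover have "off n a v \<in> {..2 * L}" using a(2) v by auto
    ultimately show "v \<in> (\<lambda>i. (a + g i) mod n) ` {..2 * L}" by blast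
  qed
  show ?thesis using W[OF st cl] sub tsp_le by (metis)
qed


lemma dist_bound:
  fixes q :: "nat \<Rightarrow> int"
  assumes st: "\<And>i. i < l \<Longrightarrow> \<bar>q (Suc i) - q i\<bar> \<le> 1"
  shows "i \<le> j \<Longrightarrow> j \<le> l \<Longrightarrow> \<bar>q j - q i\<bar> \<le> int (j - i)"
proof (induction j)
  case 0
  then show ?case by simp
next
  case (Suc j)
  show ?case
  proof (cases "i = Suc j")
    case True
    then show ?thesis by simp
  next
    case False
    then have "i \<le> j" "j < l" using Suc.prems by auto
    then have "\<bar>q j - q i\<bar> \<le> int (j - i)" using Suc.IH by simp
    moreover have "\<bar>q (Suc j) - q j\<bar> \<le> 1" using st \<open>j < l\<close> by simp
    ultimately show ?thesis using \<open>i \<le> j\<close> by (simp add: Suc_diff_le)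
  qed
qed

lemma closed_bound:
  fixes q :: "nat \<Rightarrow> int"
  assumes st: "\<And>i. i < l \<Longrightarrow> \<bar>q (Suc i) - q i\<bar> \<le> 1" and cl: "q 0 = q l"
    and i: "i \<le> l" and j: "j \<le> l"
  shows "2 * \<bar>q j - q i\<bar> \<le> int l"
proof -
  have *: "2 * \<bar>q j - q i\<bar> \<le> int l" if "i \<le> j" "j \<le> l" for i j
  proof -
    have "\<bar>q j - q i\<bar> \<le> int (j - i)" using dist_bound[where q=q and l=l, OF st] that by blast
    moreover have "\<bar>q i - q 0\<bar> \<le> int (i - 0)" using dist_bound[where q=q and l=l and i=0 and j=i, OF st] that by simp
    moreover have "\<bar>q l - q j\<bar> \<le> int (l - j)" using dist_bound[where q=q and l=l and i=j and j=l, OF st] that by simp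
    moreover have "int (j - i) = int j - int i" "int (l - j) = int l - int j" using that by auto
    ultimately have h: "q j - q i \<le> int j - int i" "q i - q j \<le> int j - int i"
      "q i - q 0 \<le> int i" "q 0 - q i \<le> int i" "q l - q j \<le> int l - int j" "q j - q l \<le> int l - int j"
      by (simp_all add: abs_le_iff)
    show ?thesis
    proof (cases "q i \<le> q j")
      case True then show ?thesis using h cl by simp
    next
      case False then show ?thesis using h cl by simp
    qed
  qed
  show ?thesis
  proof (cases "i \<le> j")
    case True then show ?thesis using * j by blast
  next
    case False then have "2 * \<bar>q i - q j\<bar> \<le> int l" using * i by simp
    then show ?thesis by (simp add: abs_minus_commute)
  qed
qed

lemma walk_fits:
  assumes n3: "n \<ge> 3" and w: "closed_walk (cycle_adj n) w"
    and ln: "walk_length w < n" and l1: "walk_length w \<ge> 1"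
  shows "fits n (set w) (walk_length w div 2)"
proof -
  define l where "l = walk_length w"
  have len: "length w = Suc l" using l1 unfolding l_def walk_length_def by auto
  have adj: "\<And>i. i < l \<Longrightarrow> cycle_adj n (w ! i) (w ! Suc i)"
    using w len unfolding closed_walk_def by auto
  have wlt: "w ! i < n" if "i \<le> l" for i
  proof (cases "i < l")
    case True then show ?thesis using adj[OF True] unfolding cycle_adj_def by auto
  next
    case False
    then have "i = Suc (l - 1)" "l - 1 < l" using that l1 unfolding l_def by auto
    then show ?thesis using adj[of "l - 1"] unfolding cycle_adj_def by metis
  qed
  define e where "e = (\<lambda>i. if (w ! i + 1) mod n = w ! Suc i then w ! i else w ! Suc i)"
  have "card (e ` {..<l}) \<le> l" using card_image_le[of "{..<l}" e] by simp
  then have "\<not> {..<n} \<subseteq> e ` {..<l}"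
    using ln card_mono[of "e ` {..<l}" "{..<n}"] unfolding l_def by auto
  then obtain c where c: "c < n" "c \<notin> e ` {..<l}" by auto
  define p where "p = (\<lambda>u. off n (Suc c mod n) u)"
  define q where "q = (\<lambda>i. int (p (w ! i)))"
  have st: "\<bar>q (Suc i) - q i\<bar> \<le> 1" if i: "i < l" for i
  proof -
    have ec: "e i \<noteq> c" using c i by auto
    have A: "cycle_adj n (w ! i) (w ! Suc i)" using adj i by blast
    show ?thesis
    proof (cases "(w ! i + 1) mod n = w ! Suc i")
      case True
      then have "w ! i \<noteq> c" using ec unfolding e_def by simp
      then have "p (w ! Suc i) = Suc (p (w ! i))"
        unfolding p_def using step_off[OF c(1) _ True] A unfolding cycle_adj_def by blast
      then show ?thesis unfolding q_def by simp
    next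
      case False
      then have F: "(w ! Suc i + 1) mod n = w ! i" using A unfolding cycle_adj_def by blast
      then have "w ! Suc i \<noteq> c" using ec False unfolding e_def by simp
      then have "p (w ! i) = Suc (p (w ! Suc i))"
        unfolding p_def using step_off[OF c(1) _ F] A unfolding cycle_adj_def by blast
      then show ?thesis unfolding q_def by simp
    qed
  qed
  have cl: "q 0 = q l"
  proof -
    have "hd w = last w" using w unfolding closed_walk_def by simp
    moreover have "hd w = w ! 0" using len by (cases w) auto
    moreover have "w \<noteq> []" using len by auto
    then have "last w = w ! l" using len by (simp add: last_conv_nth)
    ultimately show ?thesis unfolding q_def by simp
  qed
  note B = closed_bound[OF st cl]
  obtain j0 where j0: "j0 \<le> l" "\<forall>i\<le>l. q j0 \<le> q i"
  proof -
    have "finite (q ` {..l})" "q ` {..l} \<noteq> {}" by auto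
    then have "Min (q ` {..l}) \<in> q ` {..l}" by (rule Min_in)
    then obtain j where "j \<le> l" "q j = Min (q ` {..l})" by (metis atMost_iff imageE)
    moreover have "\<forall>i\<le>l. Min (q ` {..l}) \<le> q i" by auto
    ultimately show ?thesis using that by auto
  qed
  define a where "a = w ! j0"
  have a: "a < n" unfolding a_def using wlt j0 by blast
  have cn: "Suc c mod n < n" using n3 by simp
  have "\<forall>v\<in>set w. off n a v \<le> l div 2"
  proof
    fix v assume "v \<in> set w"
    then obtain i where i: "i < length w" "v = w ! i" by (auto simp: in_set_conv_nth)
    then have il: "i \<le> l" using len by simp
    have v: "v < n" using wlt il i by simp
    have le: "p a \<le> p v" using j0 il i unfolding q_def a_def by auto
    have o: "off n a v = p v - p a" unfolding p_def
      by (rule off_diff[OF cn a v]) (use le in \<open>simp add: p_def\<close>)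
    have "2 * \<bar>q i - q j0\<bar> \<le> int l" using B il j0 by blast
    then have "2 * (p v - p a) \<le> l" using le i unfolding q_def a_def by simp
    then show "off n a v \<le> l div 2" using o by simp
  qed
  then show ?thesis unfolding fits_def l_def using a by blast
qed


lemma tsp_lower:
  assumes n3: "n \<ge> 3" and S: "S \<subseteq> {..<n}" and k: "card S \<ge> 2"
    and lt: "tsp (cycle_adj n) S < n"
  shows "fits n S (tsp (cycle_adj n) S div 2)"
proof -
  obtain w0 where w0: "closed_walk (cycle_adj n) w0" "{..<n} \<subseteq> set w0" using around[of n] n3 by auto
  obtain w where w: "closed_walk (cycle_adj n) w" "S \<subseteq> set w" "walk_length w = tsp (cycle_adj n) S"
    using tsp_ex[OF w0(1), of S] w0(2) S by auto
  have "walk_length w \<ge> 1"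
  proof (rule ccontr)
    assume "\<not> walk_length w \<ge> 1"
    then have "length w \<le> 1" unfolding walk_length_def by simp
    moreover have "w \<noteq> []" using w(1) unfolding closed_walk_def by simp
    ultimately obtain x where "w = [x]" by (cases w) auto
    then have "card S \<le> 1" using w(2) card_mono[of "{x}" S] by simp
    then show False using k by simp
  qed
  then have "fits n (set w) (walk_length w div 2)" using walk_fits[OF n3 w(1)] lt w(3) by simp
  then show ?thesis using w unfolding fits_def by auto
qed

lemma fits_mono: "fits n S L \<Longrightarrow> L \<le> L' \<Longrightarrow> fits n S L'"
  unfolding fits_def by (meson order_trans)

lemma fits_first:
  assumes S: "S \<subseteq> {..<n}" "S \<noteq> {}" and f: "fits n S L"
  shows "\<exists>a\<in>S. \<forall>v\<in>S. off n a v \<le> L"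
proof -
  obtain a' where a': "a' < n" "\<forall>v\<in>S. off n a' v \<le> L" using f unfolding fits_def by blast
  have fin: "finite S" using S finite_subset by blast
  have "Min (off n a' ` S) \<in> off n a' ` S" using fin S by (intro Min_in) auto
  then obtain a where a: "a \<in> S" "off n a' a = Min (off n a' ` S)" by (metis imageE)
  have "\<forall>v\<in>S. off n a v \<le> L"
  proof
    fix v assume v: "v \<in> S"
    have le: "off n a' a \<le> off n a' v" using a fin v by simp
    have "off n a v = off n a' v - off n a' a" using off_diff[OF a'(1) _ _ le] a v S by auto
    then show "off n a v \<le> L" using a'(2) v diff_le_self le_trans by metis
  qed
  then show ?thesis using a by blast
qed

definition Kset :: "nat \<Rightarrow> nat \<Rightarrow> nat set set" where
  "Kset n k = {S. S \<subseteq> {..<n} \<and> card S = k}"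

definition Aset :: "nat \<Rightarrow> nat \<Rightarrow> nat \<Rightarrow> nat \<Rightarrow> nat set set" where
  "Aset n k L a = {S \<in> Kset n k. a \<in> S \<and> (\<forall>v\<in>S. off n a v \<le> L)}"

lemma finite_Kset: "finite (Kset n k)"
  unfolding Kset_def by (rule finite_subset[of _ "Pow {..<n}"]) auto

lemma card_Kset: "card (Kset n k) = n choose k"
  unfolding Kset_def using n_subsets[of "{..<n}" k] by simp

lemma card_B: "card {T. T \<subseteq> {..L} \<and> 0 \<in> T \<and> card T = Suc m} = L choose m"
proof -
  have "bij_betw (insert 0) {R. R \<subseteq> {1..L} \<and> card R = m} {T. T \<subseteq> {..L} \<and> 0 \<in> T \<and> card T = Suc m}"
  proof (rule bij_betw_byWitness[where f' = "\<lambda>T. T - {0}"])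
    show "\<forall>R\<in>{R. R \<subseteq> {1..L} \<and> card R = m}. insert 0 R - {0} = R" by auto
    show "\<forall>T\<in>{T. T \<subseteq> {..L} \<and> 0 \<in> T \<and> card T = Suc m}. insert 0 (T - {0}) = T" by auto
    show "insert 0 ` {R. R \<subseteq> {1..L} \<and> card R = m} \<subseteq> {T. T \<subseteq> {..L} \<and> 0 \<in> T \<and> card T = Suc m}"
    proof (rule image_subsetI)
      fix R assume "R \<in> {R. R \<subseteq> {1..L} \<and> card R = m}"
      then have R: "R \<subseteq> {1..L}" "card R = m" by auto
      then have "finite R" "0 \<notin> R" using finite_subset by auto
      then show "insert 0 R \<in> {T. T \<subseteq> {..L} \<and> 0 \<in> T \<and> card T = Suc m}" using R by auto
    qed
    show "(\<lambda>T. T - {0}) ` {T. T \<subseteq> {..L} \<and> 0 \<in> T \<and> card T = Suc m} \<subseteq> {R. R \<subseteq> {1..L} \<and> card R = m}"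
    proof (rule image_subsetI)
      fix T assume "T \<in> {T. T \<subseteq> {..L} \<and> 0 \<in> T \<and> card T = Suc m}"
      then have T: "T \<subseteq> {..L}" "0 \<in> T" "card T = Suc m" by auto
      then have "finite T" using finite_subset by auto
      then have "card (T - {0}) = m" using T by simp
      moreover have "T - {0} \<subseteq> {1..L}" using T by auto
      ultimately show "T - {0} \<in> {R. R \<subseteq> {1..L} \<and> card R = m}" by simp
    qed
  qed
  then have "card {T. T \<subseteq> {..L} \<and> 0 \<in> T \<and> card T = Suc m} = card {R. R \<subseteq> {1..L} \<and> card R = m}"
    by (simp add: bij_betw_same_card)
  also have "\<dots> = L choose m" using n_subsets[of "{1..L}" m] by simp
  finally show ?thesis .
qed

lemma card_Aset:
  assumes a: "a < n" and L: "L < n" and k: "k = Suc m"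
  shows "card (Aset n k L a) = L choose m"
proof -
  let ?B = "{T. T \<subseteq> {..L} \<and> 0 \<in> T \<and> card T = Suc m}"
  let ?g = "\<lambda>T. (\<lambda>t. (a + t) mod n) ` T"
  have bij: "bij_betw (\<lambda>S. off n a ` S) (Aset n k L a) ?B"
  proof (rule bij_betw_byWitness[where f' = ?g])
    show "\<forall>S\<in>Aset n k L a. ?g (off n a ` S) = S"
    proof
      fix S assume "S \<in> Aset n k L a"
      then have S: "S \<subseteq> {..<n}" unfolding Aset_def Kset_def by auto
      have "?g (off n a ` S) = (\<lambda>v. (a + off n a v) mod n) ` S" by (simp add: image_image)
      also have "\<dots> = (\<lambda>v. v) ` S" by (rule image_cong[OF refl]) (use off_inv[OF a] S in auto)
      also have "\<dots> = S" by simp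
      finally show "?g (off n a ` S) = S" .
    qed
    show "\<forall>T\<in>?B. off n a ` ?g T = T"
    proof
      fix T assume "T \<in> ?B"
      then have T: "\<forall>t\<in>T. t < n" using L by auto
      have "off n a ` ?g T = (\<lambda>t. off n a ((a + t) mod n)) ` T" by (simp add: image_image)
      also have "\<dots> = T" using off_of[OF a] T by simp
      finally show "off n a ` ?g T = T" .
    qed
    show "(\<lambda>S. off n a ` S) ` Aset n k L a \<subseteq> ?B"
    proof (rule image_subsetI)
      fix S assume "S \<in> Aset n k L a"
      then have S: "S \<subseteq> {..<n}" "card S = k" "a \<in> S" "\<forall>v\<in>S. off n a v \<le> L"
        unfolding Aset_def Kset_def by auto
      have "inj_on (off n a) S"
        by (rule inj_on_inverseI[where g = "\<lambda>t. (a + t) mod n"]) (use off_inv[OF a] S in auto)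
      then have "card (off n a ` S) = Suc m" using S k by (simp add: card_image)
      moreover have "0 \<in> off n a ` S" using S off_self by (metis image_eqI)
      moreover have "off n a ` S \<subseteq> {..L}" using S by auto
      ultimately show "off n a ` S \<in> ?B" by simp
    qed
    show "?g ` ?B \<subseteq> Aset n k L a"
    proof (rule image_subsetI)
      fix T assume "T \<in> ?B"
      then have T: "T \<subseteq> {..L}" "0 \<in> T" "card T = Suc m" by auto
      have Tn: "\<forall>t\<in>T. t < n" using T L by auto
      have "inj_on (\<lambda>t. (a + t) mod n) T"
        by (rule inj_on_inverseI[where g = "off n a"]) (use off_of[OF a] Tn in auto)
      then have "card (?g T) = k" using T k by (simp add: card_image)
      moreover have "?g T \<subseteq> {..<n}" using a by auto
      moreover have "a \<in> ?g T" using T a by (intro image_eqI[of _ _ 0]) auto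
      moreover have "\<forall>v\<in>?g T. off n a v \<le> L" using off_of[OF a] Tn T by auto
      ultimately show "?g T \<in> Aset n k L a" unfolding Aset_def Kset_def by auto
    qed
  qed
  then have "card (Aset n k L a) = card ?B" by (rule bij_betw_same_card)
  then show ?thesis using card_B by simp
qed

lemma card_fits:
  assumes L: "2 * L < n" and k: "k = Suc m"
  shows "card {S \<in> Kset n k. fits n S L} = n * (L choose m)"
proof -
  have eq: "{S \<in> Kset n k. fits n S L} = (\<Union>a\<in>{..<n}. Aset n k L a)"
  proof
    show "{S \<in> Kset n k. fits n S L} \<subseteq> (\<Union>a\<in>{..<n}. Aset n k L a)"
    proof clarify
      fix S assume S: "S \<in> Kset n k" "fits n S L"
      then have S1: "S \<subseteq> {..<n}" "card S = k" unfolding Kset_def by auto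
      then have "S \<noteq> {}" using k by auto
      then obtain a where "a \<in> S" "\<forall>v\<in>S. off n a v \<le> L" using fits_first[OF S1(1) _ S(2)] by blast
      then show "S \<in> (\<Union>a\<in>{..<n}. Aset n k L a)" using S S1 unfolding Aset_def by auto
    qed
    show "(\<Union>a\<in>{..<n}. Aset n k L a) \<subseteq> {S \<in> Kset n k. fits n S L}"
      unfolding Aset_def fits_def by auto
  qed
  have fin: "\<forall>a\<in>{..<n}. finite (Aset n k L a)"
    using finite_Kset unfolding Aset_def by auto
  have disj: "\<forall>a\<in>{..<n}. \<forall>b\<in>{..<n}. a \<noteq> b \<longrightarrow> Aset n k L a \<inter> Aset n k L b = {}"
  proof (intro ballI impI)
    fix a b assume ab: "a \<in> {..<n}" "b \<in> {..<n}" "a \<noteq> b"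
    show "Aset n k L a \<inter> Aset n k L b = {}"
    proof (rule ccontr)
      assume "Aset n k L a \<inter> Aset n k L b \<noteq> {}"
      then obtain S where "S \<in> Aset n k L a" "S \<in> Aset n k L b" by blast
      then have "off n a b \<le> L" "off n b a \<le> L" unfolding Aset_def by auto
      moreover have "off n a b + off n b a = n" using off_sum ab by auto
      ultimately show False using L by simp
    qed
  qed
  have "card {S \<in> Kset n k. fits n S L} = (\<Sum>a\<in>{..<n}. card (Aset n k L a))"
    unfolding eq by (rule card_UN_disjoint[OF _ fin disj]) simp
  also have "\<dots> = (\<Sum>a\<in>{..<n}. L choose m)" using card_Aset[OF _ _ k] L by simp
  finally show ?thesis by simp
qed


lemma card_filter_sum: "finite A \<Longrightarrow> card {x \<in> A. P x} = (\<Sum>x\<in>A. if P x then 1 else 0)"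
  by (simp add: sum.If_cases Int_def)

lemma per_S:
  assumes n3: "n \<ge> 3" and k: "k \<ge> 2" and S: "S \<in> Kset n k"
  shows "n \<le> tsp (cycle_adj n) S + 2 * card {L \<in> {..<(n + 1) div 2}. fits n S L}"
    and "tsp (cycle_adj n) S + 2 * card {L \<in> {..<(n + 1) div 2}. fits n S L} \<le> n + 1"
proof -
  define h where "h = (n + 1) div 2"
  define T where "T = tsp (cycle_adj n) S"
  define G where "G = {L \<in> {..<h}. fits n S L}"
  have S1: "S \<subseteq> {..<n}" "card S = k" using S unfolding Kset_def by auto
  have Tn: "T \<le> n" unfolding T_def using tsp_le_n[OF _ S1(1)] n3 by simp
  have finG: "finite G" unfolding G_def by simp
  show "n \<le> tsp (cycle_adj n) S + 2 * card {L \<in> {..<(n + 1) div 2}. fits n S L}"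
  proof (cases "T < n")
    case False
    then show ?thesis unfolding T_def by simp
  next
    case True
    then have f: "fits n S (T div 2)" unfolding T_def using tsp_lower[OF n3 S1(1)] S1 k by simp
    have "{T div 2..<h} \<subseteq> G" unfolding G_def using fits_mono[OF f] by auto
    then have "card {T div 2..<h} \<le> card G" by (rule card_mono[OF finG])
    then have "h - T div 2 \<le> card G" by simp
    moreover have "2 * (T div 2) \<le> T" by simp
    moreover have "n \<le> 2 * h" unfolding h_def by simp
    ultimately have "n \<le> T + 2 * card G" by linarith
    then show ?thesis unfolding T_def G_def h_def .
  qed
  show "tsp (cycle_adj n) S + 2 * card {L \<in> {..<(n + 1) div 2}. fits n S L} \<le> n + 1"
  proof (cases "G = {}")
    case True
    then have "card G = 0" by simp
    then have "T + 2 * card G \<le> n + 1" using Tn by simp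
    then show ?thesis unfolding T_def G_def h_def .
  next
    case False
    define L0 where "L0 = Min G"
    have L0: "L0 \<in> G" unfolding L0_def using finG False by (rule Min_in)
    have "G \<subseteq> {L0..<h}" unfolding L0_def using finG by (auto simp: G_def)
    then have "card G \<le> h - L0" using card_mono[of "{L0..<h}" G] by simp
    moreover have "L0 < h" "fits n S L0" using L0 unfolding G_def by auto
    moreover have "h \<le> n" unfolding h_def using n3 by simp
    moreover have "2 * h \<le> n + 1" unfolding h_def by simp
    moreover have "T \<le> 2 * L0" unfolding T_def
      by (rule tsp_le_fits[OF _ S1(1)]) (use n3 \<open>L0 < h\<close> \<open>h \<le> n\<close> \<open>fits n S L0\<close> in auto)
    ultimately have "T + 2 * card G \<le> n + 1" by linarith
    then show ?thesis unfolding T_def G_def h_def .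
  qed
qed

lemma sum_g:
  assumes k: "k = Suc m" and n: "n \<ge> 1"
  shows "(\<Sum>S\<in>Kset n k. card {L \<in> {..<(n + 1) div 2}. fits n S L}) = n * (((n + 1) div 2) choose k)"
proof -
  define h where "h = (n + 1) div 2"
  have "(\<Sum>S\<in>Kset n k. card {L \<in> {..<h}. fits n S L}) =
        (\<Sum>S\<in>Kset n k. \<Sum>L\<in>{..<h}. if fits n S L then 1 else 0)"
    by (rule sum.cong[OF refl]) (rule card_filter_sum, simp)
  also have "\<dots> = (\<Sum>L\<in>{..<h}. \<Sum>S\<in>Kset n k. if fits n S L then 1 else 0)"
    by (rule sum.swap)
  also have "\<dots> = (\<Sum>L\<in>{..<h}. card {S \<in> Kset n k. fits n S L})"
    by (rule sum.cong[OF refl]) (rule card_filter_sum[symmetric], rule finite_Kset)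
  also have "\<dots> = (\<Sum>L\<in>{..<h}. n * (L choose m))"
  proof (rule sum.cong[OF refl])
    fix L assume "L \<in> {..<h}"
    then have "2 * L < n" unfolding h_def by auto
    then show "card {S \<in> Kset n k. fits n S L} = n * (L choose m)" by (rule card_fits[OF _ k])
  qed
  also have "\<dots> = n * (\<Sum>L\<in>{..<h}. L choose m)" by (simp add: sum_distrib_left)
  also have "\<dots> = n * (h choose k)"
  proof -
    have h1: "h = Suc (h - 1)" unfolding h_def using n by simp
    have "(\<Sum>L\<in>{..<h}. L choose m) = (\<Sum>L\<le>h - 1. L choose m)"
      by (subst h1) (simp only: lessThan_Suc_atMost)
    also have "\<dots> = h choose k" using sum_choose_upper[of m "h - 1"] h1 k by simp
    finally show ?thesis by simp
  qed
  finally show ?thesis unfolding h_def .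
qed



lemma half_lim: "(\<lambda>n::nat. real ((n + 1) div 2) / real n) \<longlonglongrightarrow> 1/2"
proof (rule real_tendsto_sandwich[where f = "\<lambda>_. 1/2" and h = "\<lambda>n. 1/2 + (1/2) / real n"])
  show "\<forall>\<^sub>F n in sequentially. 1/2 \<le> real ((n + 1) div 2) / real n"
    using eventually_gt_at_top[of 0]
  proof (rule eventually_mono)
    fix n :: nat assume n: "0 < n"
    have "real n \<le> 2 * real ((n + 1) div 2)" by linarith
    then show "1/2 \<le> real ((n + 1) div 2) / real n" using n by (simp add: field_simps)
  qed
  show "\<forall>\<^sub>F n in sequentially. real ((n + 1) div 2) / real n \<le> 1/2 + (1/2) / real n"
    using eventually_gt_at_top[of 0]
  proof (rule eventually_mono)
    fix n :: nat assume n: "0 < n"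
    have "2 * real ((n + 1) div 2) \<le> real n + 1" by linarith
    then show "real ((n + 1) div 2) / real n \<le> 1/2 + (1/2) / real n" using n by (simp add: field_simps)
  qed
  show "(\<lambda>_. 1/2) \<longlonglongrightarrow> (1/2::real)" by simp
  have "(\<lambda>n. (1/2::real) / real n) \<longlonglongrightarrow> 0" by (rule lim_const_over_n)
  then show "(\<lambda>n. 1/2 + (1/2) / real n) \<longlonglongrightarrow> (1/2::real)"
    using tendsto_add[of "\<lambda>_. 1/2" "1/2" sequentially] by fastforce
qed

lemma factor_lim: "(\<lambda>n::nat. (real ((n + 1) div 2) - real i) / (real n - real i)) \<longlonglongrightarrow> 1/2"
proof -
  have "(\<lambda>n. (real ((n + 1) div 2) / real n - real i / real n) / (1 - real i / real n)) \<longlonglongrightarrow> (1/2 - 0) / (1 - 0)"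
    by (intro tendsto_intros half_lim lim_const_over_n) simp
  then have L: "(\<lambda>n. (real ((n + 1) div 2) / real n - real i / real n) / (1 - real i / real n)) \<longlonglongrightarrow> 1/2"
    by simp
  show ?thesis
  proof (rule Lim_transform_eventually[OF L])
    show "\<forall>\<^sub>F n in sequentially. (real ((n + 1) div 2) / real n - real i / real n) / (1 - real i / real n)
       = (real ((n + 1) div 2) - real i) / (real n - real i)"
      using eventually_gt_at_top[of i]
    proof (rule eventually_mono)
      fix n :: nat assume "i < n"
      then have "real n > 0" "real n - real i \<noteq> 0" by auto
      then show "(real ((n + 1) div 2) / real n - real i / real n) / (1 - real i / real n)
       = (real ((n + 1) div 2) - real i) / (real n - real i)"
        by (simp add: field_simps)
    qed
  qed
qed

lemma ratio_lim: "(\<lambda>n::nat. real (((n + 1) div 2) choose k) / real (n choose k)) \<longlonglongrightarrow> (1/2) ^ k"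
proof -
  have P: "(\<lambda>n. \<Prod>i\<in>{0..<k}. (real ((n + 1) div 2) - real i) / (real n - real i)) \<longlonglongrightarrow> (\<Prod>i\<in>{0..<k}. (1/2::real))"
    by (rule tendsto_prod) (rule factor_lim)
  have ch: "real (m choose k) = (\<Prod>i\<in>{0..<k}. (real m - real i) / real (k - i))" for m
    by (simp add: binomial_gbinomial gbinomial_altdef_of_nat)
  have P2: "(\<lambda>n. \<Prod>i\<in>{0..<k}. (real ((n + 1) div 2) - real i) / (real n - real i)) \<longlonglongrightarrow> (1/2::real) ^ k"
    using P by simp
  show ?thesis
  proof (rule Lim_transform_eventually[OF P2])
    show "\<forall>\<^sub>F n in sequentially. (\<Prod>i\<in>{0..<k}. (real ((n + 1) div 2) - real i) / (real n - real i))
       = real (((n + 1) div 2) choose k) / real (n choose k)"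
      using eventually_gt_at_top[of k]
    proof (rule eventually_mono)
      fix n assume n: "k < n"
      have "real (((n + 1) div 2) choose k) / real (n choose k) =
        (\<Prod>i\<in>{0..<k}. ((real ((n + 1) div 2) - real i) / real (k - i)) / ((real n - real i) / real (k - i)))"
        unfolding ch prod_dividef ..
      also have "\<dots> = (\<Prod>i\<in>{0..<k}. (real ((n + 1) div 2) - real i) / (real n - real i))"
        by (rule prod.cong) auto
      finally show "(\<Prod>i\<in>{0..<k}. (real ((n + 1) div 2) - real i) / (real n - real i))
       = real (((n + 1) div 2) choose k) / real (n choose k)" by simp
    qed
  qed
qed

theorem lemma1:
  fixes k :: nat
  assumes "k \<ge> 2"
  shows "(\<lambda>n. mu_tsp {..<n} (cycle_adj n) k / real n) \<longlonglongrightarrow> 1 - 1 / 2 ^ (k - 1)"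
proof -
  obtain m where k: "k = Suc m" "m \<ge> 1" using assms by (cases k) auto
  define r where "r = (\<lambda>n::nat. real (((n + 1) div 2) choose k) / real (n choose k))"
  have R: "r \<longlonglongrightarrow> (1/2) ^ k" unfolding r_def by (rule ratio_lim)
  have lim_eq: "1 - 2 * (1/2::real) ^ k = 1 - 1 / 2 ^ (k - 1)"
    using k by (simp add: power_divide)
  have bounds: "1 - 2 * r n \<le> mu_tsp {..<n} (cycle_adj n) k / real n \<and>
      mu_tsp {..<n} (cycle_adj n) k / real n \<le> 1 + 1 / real n - 2 * r n"
    if n: "n \<ge> 3" "k < n" for n
  proof -
    define K where "K = Kset n k"
    define g where "g = (\<lambda>S. card {L \<in> {..<(n + 1) div 2}. fits n S L})"
    define ST where "ST = (\<Sum>S\<in>K. tsp (cycle_adj n) S)"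
    define hc where "hc = ((n + 1) div 2) choose k"
    define c where "c = n choose k"
    have mu: "mu_tsp {..<n} (cycle_adj n) k = real ST / real c"
      unfolding mu_tsp_def ST_def K_def Kset_def c_def by simp
    have s1: "(\<Sum>S\<in>K. tsp (cycle_adj n) S + 2 * g S) = ST + 2 * (n * hc)"
    proof -
      have sg: "(\<Sum>S\<in>K. g S) = n * hc"
        unfolding K_def g_def hc_def by (rule sum_g[OF k(1)]) (use n in simp)
      show ?thesis unfolding ST_def by (simp add: sum.distrib sum_distrib_left[symmetric] sg)
    qed
    have s2: "(\<Sum>S\<in>K. n) \<le> (\<Sum>S\<in>K. tsp (cycle_adj n) S + 2 * g S)"
      by (rule sum_mono) (use per_S(1)[OF n(1) assms] in \<open>simp add: K_def g_def\<close>)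
    have s3: "(\<Sum>S\<in>K. tsp (cycle_adj n) S + 2 * g S) \<le> (\<Sum>S\<in>K. n + 1)"
      by (rule sum_mono) (use per_S(2)[OF n(1) assms] in \<open>simp add: K_def g_def\<close>)
    have cK: "card K = c" unfolding K_def c_def by (rule card_Kset)
    have A1: "n * c \<le> ST + 2 * (n * hc)" using s1 s2 cK by (simp add: mult.commute)
    have A2: "ST + 2 * (n * hc) \<le> (n + 1) * c" using s1 s3 cK by (simp add: mult.commute)
    have cpos: "real c > 0" unfolding c_def using n by simp
    have npos: "real n > 0" using n by simp
    have B1: "real n * real c \<le> real ST + 2 * (real n * real hc)"
    proof -
      have "real (n * c) \<le> real (ST + 2 * (n * hc))" using A1 by (simp only: of_nat_le_iff)
      then show ?thesis by simp
    qed
    have B2: "real ST + 2 * (real n * real hc) \<le> (real n + 1) * real c"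
    proof -
      have "real (ST + 2 * (n * hc)) \<le> real ((n + 1) * c)" using A2 by (simp only: of_nat_le_iff)
      then show ?thesis by (simp add: algebra_simps)
    qed
    have rn: "r n = real hc / real c" unfolding r_def hc_def c_def by simp
    have cn: "real c * real n > 0" using cpos npos by simp
    have e0: "real ST / real c / real n = real ST / (real c * real n)" by simp
    have e1: "1 - 2 * r n = (real n * real c - 2 * (real n * real hc)) / (real c * real n)"
      unfolding rn using cpos npos by (simp add: field_simps)
    have e2: "1 + 1 / real n - 2 * r n = ((real n + 1) * real c - 2 * (real n * real hc)) / (real c * real n)"
      unfolding rn using cpos npos by (simp add: field_simps)
    have "1 - 2 * r n \<le> real ST / real c / real n"
      unfolding e0 e1 by (rule divide_right_mono) (use B1 cn in linarith)+
    moreover have "real ST / real c / real n \<le> 1 + 1 / real n - 2 * r n"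
      unfolding e0 e2 by (rule divide_right_mono) (use B2 cn in linarith)+
    ultimately show ?thesis unfolding mu by simp
  qed
  have ev: "eventually (\<lambda>n. n \<ge> 3 \<and> k < n) sequentially"
    using eventually_ge_at_top[of 3] eventually_gt_at_top[of k] by (rule eventually_conj)
  show ?thesis
  proof (rule real_tendsto_sandwich[where f = "\<lambda>n. 1 - 2 * r n" and h = "\<lambda>n. 1 + 1 / real n - 2 * r n"])
    show "\<forall>\<^sub>F n in sequentially. 1 - 2 * r n \<le> mu_tsp {..<n} (cycle_adj n) k / real n"
      using ev by (rule eventually_mono) (use bounds in blast)
    show "\<forall>\<^sub>F n in sequentially. mu_tsp {..<n} (cycle_adj n) k / real n \<le> 1 + 1 / real n - 2 * r n"
      using ev by (rule eventually_mono) (use bounds in blast)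
    have "(\<lambda>n. 1 - 2 * r n) \<longlonglongrightarrow> 1 - 2 * (1/2) ^ k"
      by (intro tendsto_intros R)
    then show "(\<lambda>n. 1 - 2 * r n) \<longlonglongrightarrow> 1 - 1 / 2 ^ (k - 1)" using lim_eq by simp
    have "(\<lambda>n. 1 + 1 / real n - 2 * r n) \<longlonglongrightarrow> 1 + 0 - 2 * (1/2) ^ k"
      by (intro tendsto_intros R lim_const_over_n)
    then show "(\<lambda>n. 1 + 1 / real n - 2 * r n) \<longlonglongrightarrow> 1 - 1 / 2 ^ (k - 1)" using lim_eq by simp
  qed
qed

end
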